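(* Let $S^{ES}$ denote the complexity function of the family of evolutionary stable configurations (in the one-dimensional Riviera model). Then for every $\rho$ with $\frac{3}{5} < \rho < \frac{2}{3}$, $$S^{ES}(\rho) = (2\rho - 1) \ln(2\rho - 1) - (2 - 3\rho) \ln(2 - 3\rho) - (5\rho - 3) \ln(5\rho - 3).$$
   Context: A configuration of length $n\ge 0$ is a binary string $c_1c_2\cdots c_n$; $c_k=1$ means lot $k$ is occupied by a house, $c_k=0$ that it is empty. A house at position $k$ is blocked (from sunlight) if $2\le k\le n-1$ and $c_{k-1}=c_{k+1}=1$; lots beyond the ends of the string never obstruct sunlight. A configuration is permissible if no house is blocked. It is maximal (jammed) if it is permissible and, for every $k$ with $c_k=0$, the string obtained by setting $c_k=1$ is not permissible. A maximal configuration is resistant to predators if, for every $k$ with $c_k=0$, in the string obtained by setting $c_k=1$ the new house at position $k$ is blocked; it is resistant to altruists if, for every $k$ with $c_k=0$, in the string obtained by setting $c_k=1$ some house at a position $l\ne k$ is blocked. An evolutionary stable configuration is a maximal configuration resistant to both predators and altruists. Let $J_{k,n}$ be the number of such configurations of length $n$ with exactly $k$ occupied lots; whenever $J_{k,n}=0$ it is redefined to be $1$. The complexity function is $S(\rho)=\sup \limsup_{i\to\infty} \frac{\ln J_{k_i,n_i}}{n_i}$, where the supremum ranges over all sequences $((k_i,n_i))_i$ of pairs of non-negative integers with $n_i\to\infty$ and $k_i/n_i\to\rho$. *)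

theory Defs
  imports "HOL-Analysis.Analysis"
begin

text \<open>Configurations are bool lists; position k (1-based in the paper) is index k-1 here.
  True = occupied lot.\<close>

definition blocked :: "bool list \<Rightarrow> nat \<Rightarrow> bool" where
  "blocked c k \<longleftrightarrow> 0 < k \<and> k + 1 < length c \<and> c ! k \<and> c ! (k - 1) \<and> c ! (k + 1)"

definition permissible :: "bool list \<Rightarrow> bool" where
  "permissible c \<longleftrightarrow> (\<forall>k < length c. \<not> blocked c k)"

definition maximal_conf :: "bool list \<Rightarrow> bool" where
  "maximal_conf c \<longleftrightarrow> permissible c \<and>
     (\<forall>k < length c. \<not> c ! k \<longrightarrow> \<not> permissible (c[k := True]))"

definition resistant_predators :: "bool list \<Rightarrow> bool" where
  "resistant_predators c \<longleftrightarrow>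
     (\<forall>k < length c. \<not> c ! k \<longrightarrow> blocked (c[k := True]) k)"

definition resistant_altruists :: "bool list \<Rightarrow> bool" where
  "resistant_altruists c \<longleftrightarrow>
     (\<forall>k < length c. \<not> c ! k \<longrightarrow> (\<exists>l < length c. l \<noteq> k \<and> blocked (c[k := True]) l))"

definition evol_stable :: "bool list \<Rightarrow> bool" where
  "evol_stable c \<longleftrightarrow> maximal_conf c \<and> resistant_predators c \<and> resistant_altruists c"

definition J_ES :: "nat \<Rightarrow> nat \<Rightarrow> nat" where
  "J_ES k n = (let m = card {c :: bool list. length c = n \<and> length (filter id c) = k \<and> evol_stable c}
               in if m = 0 then 1 else m)"

definition S_ES :: "real \<Rightarrow> ereal" where
  "S_ES \<rho> = Sup {limsup (\<lambda>i. ereal (ln (real (J_ES (k i) (n i))) / real (n i))) | k n :: nat \<Rightarrow> nat.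
                  filterlim n at_top sequentially \<and>
                  (\<lambda>i. real (k i) / real (n i)) \<longlonglongrightarrow> \<rho>}"

end

theory Submission
  imports Defs "HOL-Real_Asymp.Real_Asymp"
begin


fun tok :: "bool \<Rightarrow> bool list" where
  "tok False = [True, True, False]"
| "tok True = [True, False, True, True, False]"

fun ok :: "bool list \<Rightarrow> bool" where
  "ok (a # b # l) = ((a \<or> b) \<and>
     (case l of [] \<Rightarrow> True
      | c # l' \<Rightarrow> \<not> (a \<and> b \<and> c) \<and>
          (case l' of d # e # _ \<Rightarrow> \<not> (\<not> a \<and> b \<and> \<not> c \<and> d \<and> \<not> e) | _ \<Rightarrow> True))
     \<and> ok (b # l))"
| "ok _ = True"

lemma ok_tok: "ok (False # tok b @ s) = ok (False # s)"
proof (cases s)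
  case Nil then show ?thesis by (cases b) simp_all
next
  case (Cons x s1)
  then show ?thesis
  proof (cases s1)
    case Nil then show ?thesis using Cons by (cases b; cases x) simp_all
  next
    case (Cons y s2)
    then show ?thesis using \<open>s = x # s1\<close> by (cases b; cases x; cases y; cases s2) simp_all
  qed
qed

definition W :: "bool list \<Rightarrow> nat \<Rightarrow> bool" where
  "W l i \<longleftrightarrow> (i+1 < length l \<longrightarrow> l!i \<or> l!(i+1)) \<and>
     (i+2 < length l \<longrightarrow> \<not>(l!i \<and> l!(i+1) \<and> l!(i+2))) \<and>
     (i+4 < length l \<longrightarrow> \<not>(\<not> l!i \<and> l!(i+1) \<and> \<not> l!(i+2) \<and> l!(i+3) \<and> \<not> l!(i+4)))"

lemma W_Suc: "W (x # l) (Suc j) = W l j"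
  by (simp add: W_def add.commute)

lemma all_Suc: "(\<forall>i. P i) \<longleftrightarrow> P 0 \<and> (\<forall>j. P (Suc j))"
  by (metis not0_implies_Suc)

lemma ok_W: "ok l \<longleftrightarrow> (\<forall>i. W l i)"
proof (induction l rule: ok.induct)
  case (1 a b l)
  have "W (a # b # l) 0 \<longleftrightarrow> ((a \<or> b) \<and>
     (case l of [] \<Rightarrow> True
      | c # l' \<Rightarrow> \<not> (a \<and> b \<and> c) \<and>
          (case l' of d # e # _ \<Rightarrow> \<not> (\<not> a \<and> b \<and> \<not> c \<and> d \<and> \<not> e) | _ \<Rightarrow> True)))"
    apply (cases l; simp add: W_def)
    apply (rename_tac c l', case_tac l'; simp)
    apply (rename_tac d l'', case_tac l''; simp)
    done
  then show ?case using 1 by (subst all_Suc) (simp add: W_Suc)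
next
  case "2_1" then show ?case by (simp add: W_def)
next
  case "2_2" then show ?case by (simp add: W_def)
qed



definition P :: "bool list \<Rightarrow> bool" where
  "P c \<longleftrightarrow> permissible c \<and> (\<forall>k<length c. \<not> c!k \<longrightarrow> 0<k \<and> k+1<length c \<and> c!(k-1) \<and> c!(k+1) \<and>
      ((1<k \<and> c!(k-2)) \<or> (k+2<length c \<and> c!(k+2))))"

lemma blocked_upd:
  assumes "blocked (c[k := True]) l" "l \<noteq> k" "l \<noteq> k - 1" "l \<noteq> k + 1" "k < length c"
  shows "blocked c l"
proof -
  have "l - 1 \<noteq> k" using assms(1,4) unfolding blocked_def by auto
  moreover have "l + 1 \<noteq> k" using assms(3) by auto
  ultimately show ?thesis using assms unfolding blocked_def by (auto simp: nth_list_update)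
qed

lemma es_P: "evol_stable c \<longleftrightarrow> P c"
proof
  assume es: "evol_stable c"
  have perm: "permissible c" using es by (simp add: evol_stable_def maximal_conf_def)
  show "P c" unfolding P_def
  proof (rule conjI[OF perm], intro allI impI)
    fix k assume k: "k < length c" "\<not> c!k"
    have bl: "blocked (c[k := True]) k" using es k by (simp add: evol_stable_def resistant_predators_def)
    have "k - 1 \<noteq> k" "k + 1 \<noteq> k" using bl by (auto simp: blocked_def)
    then have A: "0<k \<and> k+1<length c \<and> c!(k-1) \<and> c!(k+1)" using bl by (auto simp: blocked_def nth_list_update)
    obtain l where l: "l < length c" "l \<noteq> k" "blocked (c[k := True]) l"
      using es k by (auto simp: evol_stable_def resistant_altruists_def)
    have "(1<k \<and> c!(k-2)) \<or> (k+2<length c \<and> c!(k+2))"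
    proof (cases "l = k - 1")
      case True
      then show ?thesis using l k by (auto simp: blocked_def nth_list_update numeral_2_eq_2)
    next
      case False
      show ?thesis
      proof (cases "l = k + 1")
        case True
        then show ?thesis using l k by (auto simp: blocked_def nth_list_update)
      next
        assume False2: "l \<noteq> k + 1"
        have "blocked c l" using blocked_upd[OF l(3) l(2) False False2 k(1)] .
        then show ?thesis using perm l(1) by (simp add: permissible_def)
      qed
    qed
    then show "0<k \<and> k+1<length c \<and> c!(k-1) \<and> c!(k+1) \<and>
      ((1<k \<and> c!(k-2)) \<or> (k+2<length c \<and> c!(k+2)))" using A by blast
  qed
next
  assume p: "P c"
  have perm: "permissible c" using p by (simp add: P_def)
  have pred: "blocked (c[k := True]) k" if "k < length c" "\<not> c!k" for k
    using p that unfolding P_def blocked_def by (auto simp: nth_list_update)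
  have "maximal_conf c" unfolding maximal_conf_def permissible_def
    using perm pred by (auto simp: permissible_def)
  moreover have "resistant_predators c" using pred by (simp add: resistant_predators_def)
  moreover have "resistant_altruists c" unfolding resistant_altruists_def
  proof (intro allI impI)
    fix k assume k: "k < length c" "\<not> c!k"
    have A: "0<k \<and> k+1<length c \<and> c!(k-1) \<and> c!(k+1) \<and>
      ((1<k \<and> c!(k-2)) \<or> (k+2<length c \<and> c!(k+2)))" using p k by (simp add: P_def)
    show "\<exists>l<length c. l \<noteq> k \<and> blocked (c[k := True]) l"
    proof (cases "1<k \<and> c!(k-2)")
      case True
      have "blocked (c[k := True]) (k-1)" using A True unfolding blocked_def
        by (auto simp: nth_list_update numeral_2_eq_2)
      then show ?thesis using A by (intro exI[of _ "k-1"]) auto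
    next
      case False
      have "blocked (c[k := True]) (k+1)" using A False unfolding blocked_def
        by (auto simp: nth_list_update)
      then show ?thesis using A by (intro exI[of _ "k+1"]) auto
    qed
  qed
  ultimately show "evol_stable c" by (simp add: evol_stable_def)
qed

lemma dnth: "i \<le> length c + 1 \<Longrightarrow> (False # c @ [False]) ! i = (0 < i \<and> i \<le> length c \<and> c ! (i - 1))"
  by (cases i) (auto simp: nth_append)



lemma P_W:
  assumes ne: "c \<noteq> []"
  shows "P c \<longleftrightarrow> (\<forall>i. W (False # c @ [False]) i)"
proof
  let ?d = "False # c @ [False]"
  let ?n = "length c"
  assume p: "P c"
  have perm: "\<And>k. k < ?n \<Longrightarrow> \<not> blocked c k" using p by (simp add: P_def permissible_def)
  have z: "\<And>k. k < ?n \<Longrightarrow> \<not> c!k \<Longrightarrow> 0<k \<and> k+1<?n \<and> c!(k-1) \<and> c!(k+1) \<and>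
      ((1<k \<and> c!(k-2)) \<or> (k+2<?n \<and> c!(k+2)))" using p by (simp add: P_def)
  show "\<forall>i. W ?d i"
  proof
    fix i
    have p1: "?d!i \<or> ?d!(i+1)" if "i+1 < ?n+2"
    proof (cases "i < ?n")
      case True
      then show ?thesis using z[OF True] that by (auto simp: dnth nth_append split: if_split_asm)
    next
      case False
      then have "i = ?n" using that by simp
      moreover have "c!(?n-1)" using z[of "?n-1"] ne by (cases c rule: rev_cases) auto
      ultimately show ?thesis using ne by (auto simp: dnth nth_append split: if_split_asm)
    qed
    have p2: "\<not>(?d!i \<and> ?d!(i+1) \<and> ?d!(i+2))" if "i+2 < ?n+2"
    proof
      assume h: "?d!i \<and> ?d!(i+1) \<and> ?d!(i+2)"
      then have "0 < i" "i+1 < ?n" "c!(i-1)" "c!i" "c!(i+1)" using that by (auto simp: dnth nth_append split: if_split_asm)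
      then have "blocked c i" unfolding blocked_def by simp
      with perm \<open>i+1 < ?n\<close> show False by simp
    qed
    have p3: "\<not>(\<not> ?d!i \<and> ?d!(i+1) \<and> \<not> ?d!(i+2) \<and> ?d!(i+3) \<and> \<not> ?d!(i+4))" if "i+4 < ?n+2"
    proof
      assume h: "\<not> ?d!i \<and> ?d!(i+1) \<and> \<not> ?d!(i+2) \<and> ?d!(i+3) \<and> \<not> ?d!(i+4)"
      have "\<not> c!(i+1)" using h that by (auto simp: dnth nth_append split: if_split_asm)
      from z[OF _ this] that have zz: "(1<i+1 \<and> c!(i+1-2)) \<or> (i+1+2<?n \<and> c!(i+1+2))" by simp
      show False
      proof (cases "1 < i+1")
        case True
        then have "\<not> c!(i-1)" using h that by (auto simp: dnth nth_append split: if_split_asm)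
        moreover have "i+1-2 = i-1" using True by simp
        moreover have e: "i+1+2 = i+3" by simp
        ultimately have "i+3<?n \<and> c!(i+3)" using zz[unfolded e] by auto
        then show False using h that by (auto simp: dnth nth_append add.commute[of 3 i] split: if_split_asm)
      next
        case False
        moreover have e: "i+1+2 = i+3" by simp
        ultimately have "i+3<?n \<and> c!(i+3)" using zz[unfolded e] by auto
        then show False using h that by (auto simp: dnth nth_append add.commute[of 3 i] split: if_split_asm)
      qed
    qed
    show "W ?d i" unfolding W_def using p1 p2 p3 by simp
  qed
next
  let ?d = "False # c @ [False]"
  let ?n = "length c"
  assume w: "\<forall>i. W ?d i"
  have w1: "\<And>i. i+1 < ?n+2 \<Longrightarrow> ?d!i \<or> ?d!(i+1)"
   and w2: "\<And>i. i+2 < ?n+2 \<Longrightarrow> \<not>(?d!i \<and> ?d!(i+1) \<and> ?d!(i+2))"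
   and w3: "\<And>i. i+4 < ?n+2 \<Longrightarrow> \<not>(\<not> ?d!i \<and> ?d!(i+1) \<and> \<not> ?d!(i+2) \<and> ?d!(i+3) \<and> \<not> ?d!(i+4))"
    using w by (auto simp: W_def)
  have perm: "permissible c" unfolding permissible_def
  proof (intro allI impI notI)
    fix k assume k: "k < ?n" "blocked c k"
    then have "0 < k" "k+1 < ?n" "c!(k-1)" "c!k" "c!(k+1)" by (auto simp: blocked_def)
    moreover have e: "?d!k = c!(k-1)" "?d!(k+1) = c!k" "?d!(k+2) = c!(k+1)"
      using \<open>0<k\<close> \<open>k+1 < ?n\<close> by (auto simp: nth_append)
    moreover have "\<not>(?d!k \<and> ?d!(k+1) \<and> ?d!(k+2))" using w2[of k] \<open>k < ?n\<close> by (meson add_less_mono1)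
    ultimately show False unfolding e by blast
  qed
  have zz: "0<k \<and> k+1<?n \<and> c!(k-1) \<and> c!(k+1) \<and>
      ((1<k \<and> c!(k-2)) \<or> (k+2<?n \<and> c!(k+2)))" if k: "k < ?n" "\<not> c!k" for k
  proof -
    have e0: "?d!k = (0<k \<and> c!(k-1))" using k dnth[of k c] by auto
    have e1: "?d!(k+1) = c!k" using k by (simp add: nth_append)
    have e2: "?d!(k+2) = (k+1 < ?n \<and> c!(k+1))" using k dnth[of "k+2" c] by auto
    from w1[of k] k e0 e1 have A: "0<k" "c!(k-1)" by auto
    from w1[of "k+1"] k e1 e2 have B: "k+1 < ?n" "c!(k+1)" by auto
    have i: "k-1+1 = k" "k-1+2 = k+1" "k-1+3=k+2" "k-1+4 = k+3" using A by auto
    have lt: "k-1+4 < ?n+2" using B A by simp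
    have "\<not>(\<not> ?d!(k-1) \<and> ?d!k \<and> \<not> ?d!(k+1) \<and> ?d!(k+2) \<and> \<not> ?d!(k+3))"
      using w3[OF lt] unfolding i .
    hence o: "?d!(k-1) \<or> ?d!(k+3)" using A B e0 e1 e2 k by auto
    have j: "k-1-1 = k-2" by simp
    have e3: "?d!(k-1) = (1<k \<and> c!(k-2))" using A k dnth[of "k-1" c] unfolding j by auto
    have e4: "?d!(k+3) = (k+2 < ?n \<and> c!(k+2))"
    proof (cases "k+2 < ?n")
      case True
      then show ?thesis using dnth[of "k+3" c] by auto
    next
      case False
      then have "k+3 = ?n+1" using B by simp
      then show ?thesis using False by (simp add: nth_append)
    qed
    show ?thesis using o A B unfolding e3 e4 by blast
  qed
  show "P c" unfolding P_def using perm zz by blast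
qed



lemma gen_ok: "ok (False # concat (map tok w) @ [True, True] @ [False])"
proof (induction w)
  case Nil then show ?case by simp
next
  case (Cons b w)
  have "False # concat (map tok (b # w)) @ [True, True] @ [False]
      = False # tok b @ (concat (map tok w) @ [True, True] @ [False])" by simp
  then show ?case using Cons ok_tok by simp
qed

definition FF :: "bool list set" where
  "FF = {[True], [True, True], [True, False, True, True]}"

lemma parse:
  "ok (False # c @ [False]) \<Longrightarrow> c \<noteq> [] \<Longrightarrow> \<exists>w f. c = concat (map tok w) @ f \<and> f \<in> FF"
proof (induction "length c" arbitrary: c rule: less_induct)
  case less
  have step: "\<exists>w f. c = concat (map tok w) @ f \<and> f \<in> FF"
    if c: "c = tok b @ s" for b s
  proof -
    have "ok (False # s @ [False])" using less.prems(1) ok_tok[of b "s @ [False]"] c by simp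
    moreover have "s \<noteq> []" using less.prems(1) c by (cases b) auto
    moreover have "length s < length c" using c by (cases b) auto
    ultimately obtain w f where "s = concat (map tok w) @ f" "f \<in> FF" using less.hyps by blast
    then show ?thesis using c by (intro exI[of _ "b # w"] exI[of _ f]) simp
  qed
  have base: "c \<in> FF \<Longrightarrow> \<exists>w f. c = concat (map tok w) @ f \<and> f \<in> FF"
    by (intro exI[of _ "[]"] exI[of _ c]) simp
  obtain x c1 where c: "c = x # c1" using less.prems(2) by (cases c) auto
  show ?case
  proof (cases c1)
    case Nil
    then show ?thesis using c less.prems(1) by (intro base, cases x) (auto simp: FF_def)
  next
    case (Cons y c2)
    show ?thesis
    proof (cases c2)
      case Nil
      then show ?thesis using c Cons less.prems(1) by (intro base, cases x; cases y) (auto simp: FF_def)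
    next
      case (Cons z c3)
      note C2 = Cons
      show ?thesis
      proof (cases "x \<and> y \<and> \<not> z")
        case True
        then show ?thesis using step[of False c3] c C2 \<open>c1 = y # c2\<close> by simp
      next
        case False
        then have xyz: "x" "\<not> y" "z" using c C2 \<open>c1 = y # c2\<close> less.prems(1) by (cases x; cases y; cases z; simp)+
        show ?thesis
        proof (cases c3)
          case Nil
          then show ?thesis using xyz c C2 \<open>c1 = y # c2\<close> less.prems(1) by simp
        next
          case (Cons u c4)
          note C3 = Cons
          show ?thesis
          proof (cases c4)
            case Nil
            then show ?thesis using xyz c C2 C3 \<open>c1 = y # c2\<close> less.prems(1)
              by (intro base, cases u) (auto simp: FF_def)
          next
            case (Cons v c5)
            have u: "u" using xyz c C2 C3 Cons \<open>c1 = y # c2\<close> less.prems(1) by (cases u) auto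
            have v: "\<not> v" using xyz u c C2 C3 Cons \<open>c1 = y # c2\<close> less.prems(1) by (cases v) auto
            show ?thesis using step[of True c5] xyz u v c C2 C3 Cons \<open>c1 = y # c2\<close> by simp
          qed
        qed
      qed
    qed
  qed
qed



abbreviation ones :: "bool list \<Rightarrow> nat" where "ones c \<equiv> length (filter id c)"

lemma len_tok': "length (tok b) = (if b then 5 else 3)" "ones (tok b) = (if b then 3 else 2)"
  by (cases b; simp)+

lemma len_tok2: "length (concat (map tok w)) = 3 * length w + 2 * ones w"
  by (induction w) (auto simp: len_tok')

lemma ones_tok: "ones (concat (map tok w)) = 2 * length w + ones w"
  by (induction w) (auto simp: len_tok')

lemma es_ok: "c \<noteq> [] \<Longrightarrow> evol_stable c \<longleftrightarrow> ok (False # c @ [False])"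
  using es_P P_W ok_W by simp

definition SS :: "nat \<Rightarrow> nat \<Rightarrow> bool list set" where
  "SS L a = {w. length w = L \<and> ones w = a}"

lemma SS_finite: "finite (SS L a)"
proof -
  have "SS L a \<subseteq> {w. set w \<subseteq> UNIV \<and> length w = L}" by (auto simp: SS_def)
  moreover have "finite {w::bool list. set w \<subseteq> UNIV \<and> length w = L}"
    by (rule finite_lists_length_eq) simp
  ultimately show ?thesis by (rule finite_subset)
qed

lemma SS_Suc: "SS (Suc L) a = (Cons False) ` SS L a \<union> (if a = 0 then {} else (Cons True) ` SS L (a - 1))"
  by (auto simp: SS_def length_Suc_conv image_iff split: if_splits)

lemma card_SS: "card (SS L a) = L choose a"
proof (induction L arbitrary: a)
  case 0
  have "SS 0 a = (if a = 0 then {[]} else {})" by (auto simp: SS_def)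
  then show ?case by simp
next
  case (Suc L)
  show ?case
  proof (cases a)
    case 0
    then show ?thesis using Suc[of 0] by (simp add: SS_Suc card_image)
  next
    case (Suc a')
    have "card (SS (Suc L) a) = card ((Cons False) ` SS L a) + card ((Cons True) ` SS L a')"
      unfolding SS_Suc using Suc by (subst card_Un_disjoint) (auto simp: SS_finite)
    also have "\<dots> = card (SS L a) + card (SS L a')" by (simp add: card_image)
    finally show ?thesis using Suc.IH[of a] Suc.IH[of a'] \<open>a = Suc a'\<close> by simp
  qed
qed

definition EE :: "nat \<Rightarrow> nat \<Rightarrow> bool list set" where
  "EE n k = {c. length c = n \<and> ones c = k \<and> evol_stable c}"

lemma EE_finite: "finite (EE n k)"
proof -
  have "EE n k \<subseteq> {w. set w \<subseteq> UNIV \<and> length w = n}" by (auto simp: EE_def)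
  moreover have "finite {w::bool list. set w \<subseteq> UNIV \<and> length w = n}"
    by (rule finite_lists_length_eq) simp
  ultimately show ?thesis by (rule finite_subset)
qed

lemma J_ES_EE: "J_ES k n = (if card (EE n k) = 0 then 1 else card (EE n k))"
  by (simp add: J_ES_def EE_def Let_def)

definition GG :: "nat \<Rightarrow> nat \<Rightarrow> bool list \<Rightarrow> bool list set" where
  "GG n k f = (\<lambda>w. concat (map tok w) @ f) ` SS (2*(k - ones f) - (n - length f)) (2*(n - length f) - 3*(k - ones f))"

lemma EE_sub: "n \<ge> 1 \<Longrightarrow> EE n k \<subseteq> GG n k [True] \<union> GG n k [True, True] \<union> GG n k [True, False, True, True]"
proof
  fix c assume n: "n \<ge> 1" and c: "c \<in> EE n k"
  then have ne: "c \<noteq> []" by (auto simp: EE_def)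
  with c have "ok (False # c @ [False])" using es_ok by (auto simp: EE_def)
  then obtain w f where wf: "c = concat (map tok w) @ f" "f \<in> FF" using parse ne by blast
  have ln: "n = 3 * length w + 2 * ones w + length f" "k = 2 * length w + ones w + ones f"
    using c wf by (auto simp: EE_def len_tok2 ones_tok)
  have "w \<in> SS (2*(k - ones f) - (n - length f)) (2*(n - length f) - 3*(k - ones f))"
    unfolding SS_def using ln by simp
  then have "c \<in> GG n k f" unfolding GG_def using wf by blast
  then show "c \<in> GG n k [True] \<union> GG n k [True, True] \<union> GG n k [True, False, True, True]"
    using wf(2) by (auto simp: FF_def)
qed

definition Bnd :: "nat \<Rightarrow> nat \<Rightarrow> nat \<Rightarrow> nat \<Rightarrow> nat" where
  "Bnd n k l q = (2*(k - q) - (n - l)) choose (2*(n - l) - 3*(k - q))"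

lemma card_GG: "card (GG n k f) \<le> Bnd n k (length f) (ones f)"
  unfolding GG_def Bnd_def using card_image_le[OF SS_finite] card_SS by metis

lemma card_EE_upper: "n \<ge> 1 \<Longrightarrow> card (EE n k) \<le> Bnd n k 1 1 + Bnd n k 2 2 + Bnd n k 4 3"
proof -
  assume n: "n \<ge> 1"
  have fin: "finite (GG n k f)" for f unfolding GG_def by (simp add: SS_finite)
  have "card (EE n k) \<le> card (GG n k [True] \<union> GG n k [True, True] \<union> GG n k [True, False, True, True])"
    by (rule card_mono) (use fin EE_sub[OF n] in auto)
  also have "\<dots> \<le> card (GG n k [True]) + card (GG n k [True, True]) + card (GG n k [True, False, True, True])"
    by (meson card_Un_le add_le_mono order_trans le_refl)
  also have "\<dots> \<le> Bnd n k 1 1 + Bnd n k 2 2 + Bnd n k 4 3"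
    using card_GG[of n k "[True]"] card_GG[of n k "[True, True]"] card_GG[of n k "[True, False, True, True]"]
    by (simp add: numeral_eq_Suc)
  finally show ?thesis .
qed

lemma tok_inj: "concat (map tok w1) @ [True, True] = concat (map tok w2) @ [True, True] \<Longrightarrow> w1 = w2"
proof (induction w1 arbitrary: w2)
  case Nil
  then show ?case by (cases w2) (auto elim: tok.elims)
next
  case (Cons a w1)
  then show ?case
  proof (cases w2)
    case Nil
    then show ?thesis using Cons.prems by (cases a) auto
  next
    case (Cons b w2')
    then show ?thesis using Cons.prems Cons.IH by (cases a; cases b) auto
  qed
qed

lemma card_EE_lower: "L choose a \<le> card (EE (3*L + 2*a + 2) (2*L + a + 2))"
proof -
  let ?g = "\<lambda>w. concat (map tok w) @ [True, True]"
  have "inj_on ?g (SS L a)" by (rule inj_onI) (rule tok_inj)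
  moreover have "?g ` SS L a \<subseteq> EE (3*L + 2*a + 2) (2*L + a + 2)"
  proof
    fix c assume "c \<in> ?g ` SS L a"
    then obtain w where w: "w \<in> SS L a" "c = ?g w" by blast
    have "evol_stable c" using es_ok[of c] gen_ok[of w] w(2) by simp
    then show "c \<in> EE (3*L + 2*a + 2) (2*L + a + 2)"
      using w by (simp add: EE_def SS_def len_tok2 ones_tok)
  qed
  ultimately have "card (SS L a) \<le> card (EE (3*L + 2*a + 2) (2*L + a + 2))"
    using card_inj_on_le EE_finite by blast
  then show ?thesis by (simp add: card_SS)
qed



lemma fact_lower: "real m * ln (real m) - real m \<le> ln (fact m)"
proof (induction m)
  case 0 then show ?case by simp
next
  case (Suc m)
  have fs: "ln (fact (Suc m) :: real) = ln (real (Suc m)) + ln (fact m)"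
    by (simp add: ln_mult)
  have key: "real m * ln (real m + 1) - real m * ln (real m) \<le> 1"
  proof (cases "m = 0")
    case True then show ?thesis by simp
  next
    case False
    then have mp: "real m > 0" by simp
    have "ln ((real m + 1) / real m) \<le> (real m + 1) / real m - 1"
      by (rule ln_le_minus_one) (use mp in simp)
    also have "\<dots> = 1 / real m" using mp by (simp add: field_simps)
    finally have "ln (real m + 1) - ln (real m) \<le> 1 / real m"
      using mp by (simp add: ln_div)
    then have "real m * (ln (real m + 1) - ln (real m)) \<le> real m * (1 / real m)"
      using mp by (intro mult_left_mono) auto
    then show ?thesis using mp by (simp add: right_diff_distrib)
  qed
  show ?case using Suc.IH key fs by (simp add: algebra_simps)
qed

lemma fact_upper: "m \<ge> 1 \<Longrightarrow> ln (fact m) \<le> (real m + 1) * ln (real m) - real m + 1"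
proof (induction m rule: dec_induct)
  case base then show ?case by simp
next
  case (step m)
  then have mp: "real m > 0" by simp
  have fs: "ln (fact (Suc m) :: real) = ln (real (Suc m)) + ln (fact m)"
    by (simp add: ln_mult)
  have "ln (real m / (real m + 1)) \<le> real m / (real m + 1) - 1"
    by (rule ln_le_minus_one) (use mp in simp)
  also have "\<dots> = - 1 / (real m + 1)" using mp by (simp add: field_simps)
  finally have "ln (real m) - ln (real m + 1) \<le> - 1 / (real m + 1)"
    using mp by (simp add: ln_div)
  then have "(real m + 1) * (ln (real m) - ln (real m + 1)) \<le> (real m + 1) * (- 1 / (real m + 1))"
    using mp by (intro mult_left_mono) auto
  then have key: "(real m + 1) * ln (real m) + 1 \<le> (real m + 1) * ln (real m + 1)"
    using mp by (simp add: right_diff_distrib field_simps)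
  show ?case using step.IH key fs by (simp add: algebra_simps)
qed

definition Ent :: "real \<Rightarrow> real \<Rightarrow> real" where
  "Ent x y = x * ln x - y * ln y - (x - y) * ln (x - y)"

lemma ln_binom:
  assumes "1 \<le> a" "a < L"
  shows "ln (real (L choose a)) = ln (fact L) - ln (fact a) - ln (fact (L - a))"
proof -
  have "real (L choose a) = fact L / (fact a * fact (L - a))"
    using assms by (simp add: binomial_fact)
  then show ?thesis by (simp add: ln_div ln_mult)
qed

lemma binom_bounds:
  assumes a: "1 \<le> a" "a < L"
  shows "\<bar>ln (real (L choose a)) - Ent (real L) (real a)\<bar> \<le> 2 * ln (real L) + 2"
proof -
  have b: "1 \<le> L - a" using a by simp
  have rb: "real (L - a) = real L - real a" using a by simp
  have lL: "ln (real a) \<le> ln (real L)" "ln (real (L - a)) \<le> ln (real L)" "0 \<le> ln (real a)"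
    "0 \<le> ln (real (L - a))"
    using a by auto
  have u1: "ln (fact L) \<le> (real L + 1) * ln (real L) - real L + 1" using fact_upper a by simp
  have u2: "ln (fact a) \<le> (real a + 1) * ln (real a) - real a + 1" using fact_upper a by simp
  have u3: "ln (fact (L - a)) \<le> (real (L - a) + 1) * ln (real (L - a)) - real (L - a) + 1"
    using fact_upper[OF b] .
  have l1: "real L * ln (real L) - real L \<le> ln (fact L)" by (rule fact_lower)
  have l2: "real a * ln (real a) - real a \<le> ln (fact a)" by (rule fact_lower)
  have l3: "real (L - a) * ln (real (L - a)) - real (L - a) \<le> ln (fact (L - a))" by (rule fact_lower)
  show ?thesis unfolding ln_binom[OF a] Ent_def rb[symmetric]
    using u1 u2 u3 l1 l2 l3 lL rb by (simp add: abs_le_iff algebra_simps)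
qed

definition phi :: "real \<Rightarrow> real \<Rightarrow> real" where
  "phi x y = x * ln x - y * ln y - (x - y) * ln (x - y)"

lemma binom_asym:
  fixes L a n :: "nat \<Rightarrow> nat"
  assumes n: "filterlim n at_top sequentially"
    and x: "(\<lambda>i. real (L i) / real (n i)) \<longlonglongrightarrow> x"
    and y: "(\<lambda>i. real (a i) / real (n i)) \<longlonglongrightarrow> y"
    and xy: "0 < y" "y < x"
  shows "(\<lambda>i. ln (real (L i choose a i)) / real (n i)) \<longlonglongrightarrow> phi x y"
proof -
  have rn: "filterlim (\<lambda>i. real (n i)) at_top sequentially"
    by (rule filterlim_compose[OF filterlim_real_sequentially n])
  have ev1: "eventually (\<lambda>i. 1 \<le> real (n i)) sequentially"
    using rn unfolding filterlim_at_top by blast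
  have ev2: "eventually (\<lambda>i. 0 < real (a i) / real (n i)) sequentially"
    using order_tendstoD(1)[OF y xy(1)] .
  have xy': "(\<lambda>i. real (L i) / real (n i) - real (a i) / real (n i)) \<longlonglongrightarrow> x - y"
    by (intro tendsto_intros x y)
  have ev3: "eventually (\<lambda>i. 0 < real (L i) / real (n i) - real (a i) / real (n i)) sequentially"
    using order_tendstoD(1)[OF xy', of 0] xy by linarith
  have ev: "eventually (\<lambda>i. 1 \<le> n i \<and> 1 \<le> a i \<and> a i < L i) sequentially"
  proof (rule eventually_mono[OF eventually_conj[OF ev1 eventually_conj[OF ev2 ev3]]])
    fix i assume h: "1 \<le> real (n i) \<and> 0 < real (a i) / real (n i) \<and>
      0 < real (L i) / real (n i) - real (a i) / real (n i)"
    then have np: "real (n i) > 0" by simp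
    have "0 < real (a i)" using h np by (simp add: zero_less_divide_iff)
    moreover have "real (a i) < real (L i)" using h np by (simp add: diff_divide_distrib[symmetric] zero_less_divide_iff)
    ultimately show "1 \<le> n i \<and> 1 \<le> a i \<and> a i < L i" using h by auto
  qed
  have phil: "(\<lambda>i. phi (real (L i) / real (n i)) (real (a i) / real (n i))) \<longlonglongrightarrow> phi x y"
    unfolding phi_def using xy by (intro tendsto_intros x y) auto
  have eq: "eventually (\<lambda>i. phi (real (L i) / real (n i)) (real (a i) / real (n i))
      = Ent (real (L i)) (real (a i)) / real (n i)) sequentially"
  proof (rule eventually_mono[OF ev])
    fix i assume h: "1 \<le> n i \<and> 1 \<le> a i \<and> a i < L i"
    define N where "N = real (n i)"
    define A where "A = real (a i)"
    define B where "B = real (L i)"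
    have pos: "N > 0" "A > 0" "B - A > 0" "B > 0" using h by (auto simp: N_def A_def B_def)
    have d: "B / N - A / N = (B - A) / N" by (simp add: diff_divide_distrib)
    have "phi (B / N) (A / N) = (B / N) * (ln B - ln N) - (A / N) * (ln A - ln N) - ((B - A) / N) * (ln (B - A) - ln N)"
      unfolding phi_def d using pos by (simp add: ln_div)
    also have "\<dots> = Ent B A / N" unfolding Ent_def using pos by (simp add: field_simps)
    finally show "phi (real (L i) / real (n i)) (real (a i) / real (n i)) = Ent (real (L i)) (real (a i)) / real (n i)"
      by (simp add: N_def A_def B_def)
  qed
  have main: "(\<lambda>i. Ent (real (L i)) (real (a i)) / real (n i)) \<longlonglongrightarrow> phi x y"
    using Lim_transform_eventually[OF phil eq] .
  have lnn: "((\<lambda>t::real. ln t / t) \<longlongrightarrow> 0) at_top" by real_asymp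
  have lnn': "(\<lambda>i. ln (real (n i)) / real (n i)) \<longlonglongrightarrow> 0"
    using filterlim_compose[OF lnn rn] by (simp add: o_def)
  have inv: "(\<lambda>i. 1 / real (n i)) \<longlonglongrightarrow> 0"
    using tendsto_divide_0[OF tendsto_const filterlim_at_top_imp_at_infinity[OF rn]] .
  have lx: "(\<lambda>i. ln (real (L i) / real (n i))) \<longlonglongrightarrow> ln x"
    using xy by (intro tendsto_intros x) auto
  have g0: "(\<lambda>i. 2 * (ln (real (L i) / real (n i)) * (1 / real (n i))) + 2 * (ln (real (n i)) / real (n i)) + 2 * (1 / real (n i))) \<longlonglongrightarrow> 0"
    using tendsto_add[OF tendsto_add[OF tendsto_mult[OF tendsto_const tendsto_mult[OF lx inv]] tendsto_mult[OF tendsto_const lnn']] tendsto_mult[OF tendsto_const inv]]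
    by simp
  have err: "(\<lambda>i. (ln (real (L i choose a i)) - Ent (real (L i)) (real (a i))) / real (n i)) \<longlonglongrightarrow> 0"
  proof (rule Lim_null_comparison[OF _ g0])
    show "eventually (\<lambda>i. norm ((ln (real (L i choose a i)) - Ent (real (L i)) (real (a i))) / real (n i))
      \<le> 2 * (ln (real (L i) / real (n i)) * (1 / real (n i))) + 2 * (ln (real (n i)) / real (n i)) + 2 * (1 / real (n i))) sequentially"
    proof (rule eventually_mono[OF ev])
      fix i assume h: "1 \<le> n i \<and> 1 \<le> a i \<and> a i < L i"
      have np: "real (n i) > 0" "real (L i) > 0" using h by auto
      have bb: "\<bar>ln (real (L i choose a i)) - Ent (real (L i)) (real (a i))\<bar> \<le> 2 * ln (real (L i)) + 2"
        using binom_bounds h by blast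
      have "norm ((ln (real (L i choose a i)) - Ent (real (L i)) (real (a i))) / real (n i))
          = \<bar>ln (real (L i choose a i)) - Ent (real (L i)) (real (a i))\<bar> / real (n i)"
        using np by simp
      also have "\<dots> \<le> (2 * ln (real (L i)) + 2) / real (n i)"
        using bb np by (intro divide_right_mono) auto
      also have "\<dots> = 2 * (ln (real (L i) / real (n i)) * (1 / real (n i))) + 2 * (ln (real (n i)) / real (n i)) + 2 * (1 / real (n i))"
        using np by (simp add: ln_div field_simps)
      finally show "norm ((ln (real (L i choose a i)) - Ent (real (L i)) (real (a i))) / real (n i))
      \<le> 2 * (ln (real (L i) / real (n i)) * (1 / real (n i))) + 2 * (ln (real (n i)) / real (n i)) + 2 * (1 / real (n i))" .
    qed
  qed
  have "(\<lambda>i. Ent (real (L i)) (real (a i)) / real (n i) + (ln (real (L i choose a i)) - Ent (real (L i)) (real (a i))) / real (n i)) \<longlonglongrightarrow> phi x y + 0"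
    by (rule tendsto_add[OF main err])
  then show ?thesis by (simp add: add_divide_distrib[symmetric])
qed



lemma ratio_lim:
  fixes u :: "nat \<Rightarrow> real" and n :: "nat \<Rightarrow> nat"
  assumes n: "filterlim n at_top sequentially"
    and b: "eventually (\<lambda>i. \<bar>u i - c * real (n i)\<bar> \<le> B) sequentially"
  shows "(\<lambda>i. u i / real (n i)) \<longlonglongrightarrow> c"
proof -
  have rn: "filterlim (\<lambda>i. real (n i)) at_top sequentially"
    by (rule filterlim_compose[OF filterlim_real_sequentially n])
  have ev1: "eventually (\<lambda>i. 1 \<le> real (n i)) sequentially"
    using rn unfolding filterlim_at_top by blast
  have g0: "(\<lambda>i. B / real (n i)) \<longlonglongrightarrow> 0"
    using tendsto_divide_0[OF tendsto_const filterlim_at_top_imp_at_infinity[OF rn]] .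
  have "(\<lambda>i. u i / real (n i) - c) \<longlonglongrightarrow> 0"
  proof (rule Lim_null_comparison[OF _ g0])
    show "eventually (\<lambda>i. norm (u i / real (n i) - c) \<le> B / real (n i)) sequentially"
    proof (rule eventually_mono[OF eventually_conj[OF ev1 b]])
      fix i assume h: "1 \<le> real (n i) \<and> \<bar>u i - c * real (n i)\<bar> \<le> B"
      then have "u i / real (n i) - c = (u i - c * real (n i)) / real (n i)"
        by (simp add: field_simps)
      then show "norm (u i / real (n i) - c) \<le> B / real (n i)"
        using h by (simp add: divide_right_mono)
    qed
  qed
  then show ?thesis by (rule iffD2[OF Lim_null])
qed

lemma shift_lim:
  fixes k n :: "nat \<Rightarrow> nat" and l q :: nat
  assumes n: "filterlim n at_top sequentially"
    and kn: "(\<lambda>i. real (k i) / real (n i)) \<longlonglongrightarrow> \<rho>"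
    and r: "3/5 < \<rho>" "\<rho> < 2/3"
  shows "(\<lambda>i. real (2*(k i - q) - (n i - l)) / real (n i)) \<longlonglongrightarrow> 2*\<rho> - 1"
    and "(\<lambda>i. real (2*(n i - l) - 3*(k i - q)) / real (n i)) \<longlonglongrightarrow> 2 - 3*\<rho>"
proof -
  define m where "m = min (\<rho> - 3/5) (2/3 - \<rho>)"
  define \<delta> where "\<delta> = m / 2"
  have mm: "m \<le> \<rho> - 3/5" "m \<le> 2/3 - \<rho>" "m > 0" using r by (auto simp: m_def)
  have d1: "\<delta> > 0" unfolding \<delta>_def using mm by linarith
  have d2: "\<rho> - \<delta> \<ge> 3/5 + \<delta>" unfolding \<delta>_def using mm by linarith
  have d3: "\<rho> + \<delta> \<le> 2/3 - \<delta>" unfolding \<delta>_def using mm by linarith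
  note d = d1 d2 d3
  define M where "M = 10 * real q + real l + 2 * real l / (3 * \<delta>) + 1"
  have rn: "filterlim (\<lambda>i. real (n i)) at_top sequentially"
    by (rule filterlim_compose[OF filterlim_real_sequentially n])
  have ev1: "eventually (\<lambda>i. M \<le> real (n i)) sequentially"
    using rn unfolding filterlim_at_top by blast
  have ev2: "eventually (\<lambda>i. \<rho> - \<delta> < real (k i) / real (n i)) sequentially"
    using order_tendstoD(1)[OF kn, of "\<rho> - \<delta>"] d by simp
  have ev3: "eventually (\<lambda>i. real (k i) / real (n i) < \<rho> + \<delta>) sequentially"
    using order_tendstoD(2)[OF kn, of "\<rho> + \<delta>"] d by simp
  have ev: "eventually (\<lambda>i. real (2*(k i - q) - (n i - l)) = 2 * (real (k i) - real q) - (real (n i) - real l)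
       \<and> real (2*(n i - l) - 3*(k i - q)) = 2 * (real (n i) - real l) - 3 * (real (k i) - real q)
       \<and> real (n i) > 0) sequentially"
  proof (rule eventually_mono[OF eventually_conj[OF ev1 eventually_conj[OF ev2 ev3]]])
    fix i assume h: "M \<le> real (n i) \<and> \<rho> - \<delta> < real (k i) / real (n i) \<and> real (k i) / real (n i) < \<rho> + \<delta>"
    have Mp: "M \<ge> 10 * real q + real l + 2 * real l / (3 * \<delta>) + 1" by (simp add: M_def)
    have t: "2 * real l / (3 * \<delta>) \<ge> 0" using d by simp
    have nM: "real (n i) \<ge> 10 * real q + real l + 2 * real l / (3 * \<delta>) + 1" using h Mp by linarith
    have np: "real (n i) > 0" using nM t by linarith
    have "3/5 + \<delta> < real (k i) / real (n i)" using h d by linarith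
    then have k1: "(3/5) * real (n i) + \<delta> * real (n i) < real (k i)"
      using np by (simp add: pos_less_divide_eq algebra_simps)
    have "real (k i) / real (n i) < 2/3 - \<delta>" using h d by linarith
    then have "real (k i) < (2/3 - \<delta>) * real (n i)"
      by (simp only: pos_divide_less_eq[OF np])
    moreover have "(2/3 - \<delta>) * real (n i) = (2/3) * real (n i) - \<delta> * real (n i)"
      by (simp add: left_diff_distrib)
    ultimately have k2: "real (k i) < (2/3) * real (n i) - \<delta> * real (n i)" by simp
    have nl: "2 * real l / (3 * \<delta>) \<le> real (n i)" using nM by linarith
    have "3 * \<delta> * (2 * real l / (3 * \<delta>)) \<le> 3 * \<delta> * real (n i)"
      by (rule mult_left_mono[OF nl]) (use d in simp)
    then have dl: "2 * real l \<le> 3 * \<delta> * real (n i)" using d by simp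
    have dn: "\<delta> * real (n i) \<ge> 0" using d np by simp
    have "real q \<le> real (k i)" using k1 nM dn t by linarith
    then have a1: "q \<le> k i" by simp
    have "real l \<le> real (n i)" using nM t by linarith
    then have a2: "l \<le> n i" by simp
    have "real (n i) - real l \<le> 2 * (real (k i) - real q)"
    proof -
      have "(0::real) \<le> real l" "(0::real) \<le> real q" by simp_all
      then have "real (n i) - real l \<le> 2 * real (k i) - 2 * real q" using k1 nM dn t by linarith
      then show ?thesis by (simp add: algebra_simps)
    qed
    moreover have e1: "real (n i - l) = real (n i) - real l" by (rule of_nat_diff[OF a2])
    moreover have e2: "real (2 * (k i - q)) = 2 * (real (k i) - real q)"
      using of_nat_diff[OF a1, where 'a=real] by simp
    ultimately have "real (n i - l) \<le> real (2 * (k i - q))" by simp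
    then have a3: "n i - l \<le> 2 * (k i - q)" by (simp only: of_nat_le_iff)
    have "3 * (real (k i) - real q) \<le> 2 * (real (n i) - real l)"
    proof -
      have dl': "2 * real l \<le> 3 * (\<delta> * real (n i))" using dl by (simp add: mult.assoc)
      have "(0::real) \<le> real q" by simp
      then have "3 * real (k i) - 3 * real q \<le> 2 * real (n i) - 2 * real l" using k2 dl' by linarith
      then show ?thesis by (simp add: algebra_simps)
    qed
    moreover have e3: "real (3 * (k i - q)) = 3 * (real (k i) - real q)"
      using of_nat_diff[OF a1, where 'a=real] by simp
    moreover have e4: "real (2 * (n i - l)) = 2 * (real (n i) - real l)"
      using of_nat_diff[OF a2, where 'a=real] by simp
    ultimately have "real (3 * (k i - q)) \<le> real (2 * (n i - l))" by simp
    then have a4: "3 * (k i - q) \<le> 2 * (n i - l)" by (simp only: of_nat_le_iff)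
    show "real (2*(k i - q) - (n i - l)) = 2 * (real (k i) - real q) - (real (n i) - real l)
       \<and> real (2*(n i - l) - 3*(k i - q)) = 2 * (real (n i) - real l) - 3 * (real (k i) - real q)
       \<and> real (n i) > 0"
      using of_nat_diff[OF a3, where 'a=real] of_nat_diff[OF a4, where 'a=real] e1 e2 e3 e4 np by simp
  qed
  have rinv: "(\<lambda>i. 1 / real (n i)) \<longlonglongrightarrow> 0"
    using tendsto_divide_0[OF tendsto_const filterlim_at_top_imp_at_infinity[OF rn]] .
  have l1: "(\<lambda>i. 2 * (real (k i) / real (n i)) - 1 + (real l - 2 * real q) * (1 / real (n i))) \<longlonglongrightarrow> 2 * \<rho> - 1 + (real l - 2 * real q) * 0"
    by (intro tendsto_intros kn rinv)
  show "(\<lambda>i. real (2*(k i - q) - (n i - l)) / real (n i)) \<longlonglongrightarrow> 2*\<rho> - 1"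
  proof (rule Lim_transform_eventually)
    show "(\<lambda>i. 2 * (real (k i) / real (n i)) - 1 + (real l - 2 * real q) * (1 / real (n i))) \<longlonglongrightarrow> 2 * \<rho> - 1"
      using l1 by simp
    show "eventually (\<lambda>i. 2 * (real (k i) / real (n i)) - 1 + (real l - 2 * real q) * (1 / real (n i))
        = real (2*(k i - q) - (n i - l)) / real (n i)) sequentially"
    proof (rule eventually_mono[OF ev])
      fix i assume h: "real (2*(k i - q) - (n i - l)) = 2 * (real (k i) - real q) - (real (n i) - real l)
       \<and> real (2*(n i - l) - 3*(k i - q)) = 2 * (real (n i) - real l) - 3 * (real (k i) - real q)
       \<and> real (n i) > 0"
      then have e: "real (2*(k i - q) - (n i - l)) = 2 * (real (k i) - real q) - (real (n i) - real l)"
        and np: "real (n i) > 0" by auto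
      show "2 * (real (k i) / real (n i)) - 1 + (real l - 2 * real q) * (1 / real (n i))
        = real (2*(k i - q) - (n i - l)) / real (n i)"
        unfolding e using np by (simp add: field_simps)
    qed
  qed
  have l2: "(\<lambda>i. 2 - 3 * (real (k i) / real (n i)) + (3 * real q - 2 * real l) * (1 / real (n i))) \<longlonglongrightarrow> 2 - 3 * \<rho> + (3 * real q - 2 * real l) * 0"
    by (intro tendsto_intros kn rinv)
  show "(\<lambda>i. real (2*(n i - l) - 3*(k i - q)) / real (n i)) \<longlonglongrightarrow> 2 - 3*\<rho>"
  proof (rule Lim_transform_eventually)
    show "(\<lambda>i. 2 - 3 * (real (k i) / real (n i)) + (3 * real q - 2 * real l) * (1 / real (n i))) \<longlonglongrightarrow> 2 - 3 * \<rho>"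
      using l2 by simp
    show "eventually (\<lambda>i. 2 - 3 * (real (k i) / real (n i)) + (3 * real q - 2 * real l) * (1 / real (n i))
        = real (2*(n i - l) - 3*(k i - q)) / real (n i)) sequentially"
    proof (rule eventually_mono[OF ev])
      fix i assume h: "real (2*(k i - q) - (n i - l)) = 2 * (real (k i) - real q) - (real (n i) - real l)
       \<and> real (2*(n i - l) - 3*(k i - q)) = 2 * (real (n i) - real l) - 3 * (real (k i) - real q)
       \<and> real (n i) > 0"
      then have e: "real (2*(n i - l) - 3*(k i - q)) = 2 * (real (n i) - real l) - 3 * (real (k i) - real q)"
        and np: "real (n i) > 0" by auto
      show "2 - 3 * (real (k i) / real (n i)) + (3 * real q - 2 * real l) * (1 / real (n i))
        = real (2*(n i - l) - 3*(k i - q)) / real (n i)"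
        unfolding e using np by (simp add: field_simps)
    qed
  qed
qed



lemma fl: "0 \<le> (t::real) \<Longrightarrow> real (nat \<lfloor>t\<rfloor>) \<le> t \<and> t - 1 < real (nat \<lfloor>t\<rfloor>)"
proof -
  assume t: "0 \<le> t"
  then have "0 \<le> \<lfloor>t\<rfloor>" by simp
  then have "real (nat \<lfloor>t\<rfloor>) = of_int \<lfloor>t\<rfloor>" by simp
  then show ?thesis using floor_correct[of t] by simp
qed

lemma phi_pos: "0 < y \<Longrightarrow> y < x \<Longrightarrow> 0 \<le> phi x y"
proof -
  assume xy: "0 < y" "y < x"
  have "ln y \<le> ln x" "ln (x - y) \<le> ln x" using xy by auto
  then have "y * ln y \<le> y * ln x" "(x - y) * ln (x - y) \<le> (x - y) * ln x"
    using xy by (auto intro: mult_left_mono)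
  then show ?thesis unfolding phi_def by (simp add: algebra_simps)
qed

lemma upper_part:
  fixes k n :: "nat \<Rightarrow> nat"
  assumes n: "filterlim n at_top sequentially"
    and kn: "(\<lambda>i. real (k i) / real (n i)) \<longlonglongrightarrow> \<rho>"
    and r: "3/5 < \<rho>" "\<rho> < 2/3"
  shows "limsup (\<lambda>i. ereal (ln (real (J_ES (k i) (n i))) / real (n i))) \<le> ereal (phi (2*\<rho>-1) (2-3*\<rho>))"
proof -
  define T where "T = phi (2*\<rho>-1) (2-3*\<rho>)"
  have xy: "0 < 2 - 3*\<rho>" "2 - 3*\<rho> < 2*\<rho>-1" using r by auto
  have T0: "0 \<le> T" unfolding T_def using phi_pos[OF xy] .
  define B where "B l q i = real (Bnd (n i) (k i) l q)" for l q i
  have limB: "(\<lambda>i. ln (B l q i) / real (n i)) \<longlonglongrightarrow> T" for l q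
    unfolding B_def Bnd_def T_def
    by (rule binom_asym[OF n shift_lim(1)[OF n kn r] shift_lim(2)[OF n kn r] xy])
  have rn: "filterlim (\<lambda>i. real (n i)) at_top sequentially"
    by (rule filterlim_compose[OF filterlim_real_sequentially n])
  have l4: "(\<lambda>i. ln 4 / real (n i)) \<longlonglongrightarrow> 0"
    using tendsto_divide_0[OF tendsto_const filterlim_at_top_imp_at_infinity[OF rn]] .
  define g where "g i = ln 4 / real (n i) + max 0 (max (ln (B 1 1 i) / real (n i))
      (max (ln (B 2 2 i) / real (n i)) (ln (B 4 3 i) / real (n i))))" for i
  have "g \<longlonglongrightarrow> 0 + max 0 (max T (max T T))"
    unfolding g_def by (intro tendsto_intros l4 limB)
  then have glim: "g \<longlonglongrightarrow> T" using T0 by simp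
  have ev1: "eventually (\<lambda>i. 1 \<le> real (n i)) sequentially"
    using rn unfolding filterlim_at_top by blast
  have ev: "eventually (\<lambda>i. ereal (ln (real (J_ES (k i) (n i))) / real (n i)) \<le> ereal (g i)) sequentially"
  proof (rule eventually_mono[OF ev1])
    fix i assume h: "1 \<le> real (n i)"
    then have n1: "1 \<le> n i" by simp
    define b1 where "b1 = B 1 1 i"
    define b2 where "b2 = B 2 2 i"
    define b3 where "b3 = B 4 3 i"
    define M where "M = max 1 (max b1 (max b2 b3))"
    have cb: "card (EE (n i) (k i)) \<le> Bnd (n i) (k i) 1 1 + Bnd (n i) (k i) 2 2 + Bnd (n i) (k i) 4 3"
      using card_EE_upper[OF n1] .
    have J: "real (J_ES (k i) (n i)) \<le> 1 + b1 + b2 + b3"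
    proof -
      have "J_ES (k i) (n i) \<le> 1 + (Bnd (n i) (k i) 1 1 + Bnd (n i) (k i) 2 2 + Bnd (n i) (k i) 4 3)"
        using cb by (simp add: J_ES_EE)
      then have "real (J_ES (k i) (n i)) \<le> real (1 + (Bnd (n i) (k i) 1 1 + Bnd (n i) (k i) 2 2 + Bnd (n i) (k i) 4 3))"
        by (simp only: of_nat_le_iff)
      then show ?thesis by (simp add: b1_def b2_def b3_def B_def)
    qed
    have bnn: "0 \<le> b1" "0 \<le> b2" "0 \<le> b3" by (simp_all add: b1_def b2_def b3_def B_def)
    have Mb: "1 \<le> M" "b1 \<le> M" "b2 \<le> M" "b3 \<le> M" unfolding M_def by auto
    have M4: "1 + b1 + b2 + b3 \<le> 4 * M" using Mb by linarith
    have Jp: "0 < real (J_ES (k i) (n i))" by (simp add: J_ES_def Let_def)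
    have Mp: "1 \<le> M" unfolding M_def by simp
    have "ln (real (J_ES (k i) (n i))) \<le> ln (4 * M)"
      using J M4 Jp Mp by simp
    also have "\<dots> = ln 4 + ln M" using Mp by (simp add: ln_mult)
    finally have lJ: "ln (real (J_ES (k i) (n i))) \<le> ln 4 + ln M" .
    have np: "0 < real (n i)" using h by simp
    have Mc: "M = 1 \<or> M = b1 \<or> M = b2 \<or> M = b3" unfolding M_def by (auto simp: max_def)
    define X where "X = max 0 (max (ln b1 / real (n i)) (max (ln b2 / real (n i)) (ln b3 / real (n i))))"
    have Xb: "0 \<le> X" "ln b1 / real (n i) \<le> X" "ln b2 / real (n i) \<le> X" "ln b3 / real (n i) \<le> X"
      unfolding X_def by auto
    have lM: "ln M / real (n i) \<le> X"
    proof -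
      consider "M = 1" | "M = b1" | "M = b2" | "M = b3" using Mc by blast
      then show ?thesis using Xb by cases simp_all
    qed
    have "ln (real (J_ES (k i) (n i))) / real (n i) \<le> (ln 4 + ln M) / real (n i)"
      by (rule divide_right_mono[OF lJ less_imp_le[OF np]])
    also have "\<dots> = ln 4 / real (n i) + ln M / real (n i)" by (rule add_divide_distrib)
    also have "\<dots> \<le> ln 4 / real (n i) + X" using lM by simp
    also have "\<dots> = g i" unfolding g_def X_def b1_def b2_def b3_def ..
    finally have "ln (real (J_ES (k i) (n i))) / real (n i) \<le> g i" .
    then show "ereal (ln (real (J_ES (k i) (n i))) / real (n i)) \<le> ereal (g i)" by simp
  qed
  have "limsup (\<lambda>i. ereal (ln (real (J_ES (k i) (n i))) / real (n i))) \<le> limsup (\<lambda>i. ereal (g i))"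
    by (rule Limsup_mono[OF ev])
  also have "limsup (\<lambda>i. ereal (g i)) = ereal T"
    by (rule lim_imp_Limsup) (auto intro: tendsto_ereal glim)
  finally show ?thesis unfolding T_def .
qed



lemma lower_part:
  assumes r: "3/5 < \<rho>" "\<rho> < 2/3"
  shows "\<exists>k n. filterlim n at_top sequentially \<and> (\<lambda>i. real (k i) / real (n i)) \<longlonglongrightarrow> \<rho> \<and>
     ereal (phi (2*\<rho>-1) (2-3*\<rho>)) \<le> limsup (\<lambda>i. ereal (ln (real (J_ES (k i) (n i))) / real (n i)))"
proof -
  define x where "x = 2*\<rho> - 1"
  define y where "y = 2 - 3*\<rho>"
  have xy: "0 < y" "y < x" using r by (auto simp: x_def y_def)
  define L where "L i = nat \<lfloor>real i * x\<rfloor>" for i :: nat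
  define a where "a i = nat \<lfloor>real i * y\<rfloor>" for i :: nat
  define nw where "nw i = 3 * L i + 2 * a i + 2" for i
  define kw where "kw i = 2 * L i + a i + 2" for i
  have bL: "real (L i) \<le> real i * x \<and> real i * x - 1 < real (L i)" for i
    unfolding L_def by (rule fl) (use xy in simp)
  have ba: "real (a i) \<le> real i * y \<and> real i * y - 1 < real (a i)" for i
    unfolding a_def by (rule fl) (use xy in simp)
  have D: "- y < real (L i) * y - real (a i) * x \<and> real (L i) * y - real (a i) * x < x" for i
  proof -
    have i1: "real (L i) * y \<le> real i * x * y" using bL[of i] xy by (intro mult_right_mono) auto
    have "(real i * x - 1) * y < real (L i) * y" using bL[of i] xy by (intro mult_strict_right_mono) auto
    then have i2: "real i * x * y - y < real (L i) * y" by (simp add: algebra_simps)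
    have "real (a i) * x \<le> real i * y * x" using ba[of i] xy by (intro mult_right_mono) auto
    then have i3: "real (a i) * x \<le> real i * x * y" by (simp add: ac_simps)
    have "(real i * y - 1) * x < real (a i) * x" using ba[of i] xy by (intro mult_strict_right_mono) auto
    then have i4: "real i * x * y - x < real (a i) * x" by (simp add: algebra_simps)
    show ?thesis using i1 i2 i3 i4 by linarith
  qed
  have small: "x < 1" "y < 1" "0 < \<rho>" "\<rho> < 1" using r by (auto simp: x_def y_def)
  have sumxy: "3 * x + 2 * y = 1" "2 * x + y = \<rho>" by (simp_all add: x_def y_def)
  have nwr: "real (nw i) \<ge> real i - 3" for i
  proof -
    have "real (nw i) = 3 * real (L i) + 2 * real (a i) + 2" by (simp add: nw_def)
    moreover have "real i = 3 * (real i * x) + 2 * (real i * y)"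
    proof -
      have "real i = real i * (3 * x + 2 * y)" using sumxy by simp
      then show ?thesis by (simp add: algebra_simps)
    qed
    ultimately show ?thesis using bL[of i] ba[of i] by linarith
  qed
  have nlim: "filterlim nw at_top sequentially"
    unfolding filterlim_at_top
  proof
    fix Z :: nat
    show "eventually (\<lambda>i. Z \<le> nw i) sequentially"
    proof (rule eventually_mono[OF eventually_ge_at_top[of "Z + 3"]])
      fix i assume "Z + 3 \<le> i"
      then have "real Z \<le> real i - 3" by simp
      then have "real Z \<le> real (nw i)" using nwr[of i] by linarith
      then show "Z \<le> nw i" by simp
    qed
  qed
  have kn: "(\<lambda>i. real (kw i) / real (nw i)) \<longlonglongrightarrow> \<rho>"
  proof (rule ratio_lim[OF nlim, where B = 5])
    show "eventually (\<lambda>i. \<bar>real (kw i) - \<rho> * real (nw i)\<bar> \<le> 5) sequentially"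
    proof (rule always_eventually, rule allI)
      fix i
      have "real (kw i) - \<rho> * real (nw i) = real (L i) * y - real (a i) * x + 2 - 2 * \<rho>"
        by (simp add: kw_def nw_def x_def y_def algebra_simps)
      then show "\<bar>real (kw i) - \<rho> * real (nw i)\<bar> \<le> 5" using D[of i] xy small unfolding abs_le_iff by linarith
    qed
  qed
  have Ln: "(\<lambda>i. real (L i) / real (nw i)) \<longlonglongrightarrow> x"
  proof (rule ratio_lim[OF nlim, where B = 5])
    show "eventually (\<lambda>i. \<bar>real (L i) - x * real (nw i)\<bar> \<le> 5) sequentially"
    proof (rule always_eventually, rule allI)
      fix i
      have "real (L i) - x * real (nw i) = 2 * (real (L i) * y) - 2 * (real (a i) * x) - 2 * x"
        by (simp add: nw_def x_def y_def algebra_simps)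
      then show "\<bar>real (L i) - x * real (nw i)\<bar> \<le> 5" using D[of i] xy small
        unfolding abs_le_iff by linarith
    qed
  qed
  have an: "(\<lambda>i. real (a i) / real (nw i)) \<longlonglongrightarrow> y"
  proof (rule ratio_lim[OF nlim, where B = 5])
    show "eventually (\<lambda>i. \<bar>real (a i) - y * real (nw i)\<bar> \<le> 5) sequentially"
    proof (rule always_eventually, rule allI)
      fix i
      have "real (a i) - y * real (nw i) = 3 * (real (a i) * x) - 3 * (real (L i) * y) - 2 * y"
        by (simp add: nw_def x_def y_def algebra_simps)
      then show "\<bar>real (a i) - y * real (nw i)\<bar> \<le> 5" using D[of i] xy small
        unfolding abs_le_iff by linarith
    qed
  qed
  have blim: "(\<lambda>i. ln (real (L i choose a i)) / real (nw i)) \<longlonglongrightarrow> phi x y"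
    by (rule binom_asym[OF nlim Ln an xy])
  have pw: "ereal (ln (real (L i choose a i)) / real (nw i)) \<le> ereal (ln (real (J_ES (kw i) (nw i))) / real (nw i))" for i
  proof -
    have c: "L i choose a i \<le> card (EE (nw i) (kw i))"
      unfolding nw_def kw_def by (rule card_EE_lower)
    have J1: "1 \<le> J_ES (kw i) (nw i)" by (simp add: J_ES_def Let_def)
    have "ln (real (L i choose a i)) \<le> ln (real (J_ES (kw i) (nw i)))"
    proof (cases "L i choose a i = 0")
      case True
      have "ln (real (L i choose a i)) = 0" unfolding True by simp
      moreover have "0 \<le> ln (real (J_ES (kw i) (nw i)))" using J1 by (intro ln_ge_zero) simp
      ultimately show ?thesis by simp
    next
      case False
      have Cp: "0 < L i choose a i" using False by simp
      have cp: "0 < card (EE (nw i) (kw i))" using c Cp by linarith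
      have "J_ES (kw i) (nw i) = card (EE (nw i) (kw i))" using cp by (simp add: J_ES_EE)
      then show ?thesis using c Cp cp by simp
    qed
    moreover have "0 < real (nw i)" by (simp add: nw_def)
    ultimately show ?thesis by (simp add: divide_right_mono)
  qed
  have "ereal (phi x y) = limsup (\<lambda>i. ereal (ln (real (L i choose a i)) / real (nw i)))"
    by (rule lim_imp_Limsup[symmetric]) (auto intro: tendsto_ereal blim)
  also have "\<dots> \<le> limsup (\<lambda>i. ereal (ln (real (J_ES (kw i) (nw i))) / real (nw i)))"
    by (rule Limsup_mono) (use pw in simp)
  finally show ?thesis using nlim kn unfolding x_def y_def by blast
qed

theorem mainTheorem3:
  fixes \<rho> :: real
  assumes "3/5 < \<rho>" and "\<rho> < 2/3"
  shows "S_ES \<rho> = ereal ((2*\<rho> - 1) * ln (2*\<rho> - 1) - (2 - 3*\<rho>) * ln (2 - 3*\<rho>)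
                              - (5*\<rho> - 3) * ln (5*\<rho> - 3))"
proof -
  have e: "(2*\<rho> - 1) - (2 - 3*\<rho>) = 5*\<rho> - 3" by simp
  have rhs: "(2*\<rho> - 1) * ln (2*\<rho> - 1) - (2 - 3*\<rho>) * ln (2 - 3*\<rho>)
                              - (5*\<rho> - 3) * ln (5*\<rho> - 3) = phi (2*\<rho>-1) (2-3*\<rho>)"
    unfolding phi_def e ..
  define A where "A = {limsup (\<lambda>i. ereal (ln (real (J_ES (k i) (n i))) / real (n i))) | k n :: nat \<Rightarrow> nat.
                  filterlim n at_top sequentially \<and>
                  (\<lambda>i. real (k i) / real (n i)) \<longlonglongrightarrow> \<rho>}"
  have SA: "S_ES \<rho> = Sup A" unfolding S_ES_def A_def ..
  have up: "Sup A \<le> ereal (phi (2*\<rho>-1) (2-3*\<rho>))"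
  proof (rule Sup_least)
    fix z assume "z \<in> A"
    then obtain k n where z: "z = limsup (\<lambda>i. ereal (ln (real (J_ES (k i) (n i))) / real (n i)))"
      and n: "filterlim n at_top sequentially" and kn: "(\<lambda>i. real (k i) / real (n i)) \<longlonglongrightarrow> \<rho>"
      unfolding A_def by blast
    show "z \<le> ereal (phi (2*\<rho>-1) (2-3*\<rho>))" unfolding z by (rule upper_part[OF n kn assms])
  qed
  obtain k n where n: "filterlim n at_top sequentially" and kn: "(\<lambda>i. real (k i) / real (n i)) \<longlonglongrightarrow> \<rho>"
    and lo: "ereal (phi (2*\<rho>-1) (2-3*\<rho>)) \<le> limsup (\<lambda>i. ereal (ln (real (J_ES (k i) (n i))) / real (n i)))"
    using lower_part[OF assms] by blast
  have "limsup (\<lambda>i. ereal (ln (real (J_ES (k i) (n i))) / real (n i))) \<in> A"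
    unfolding A_def using n kn by blast
  then have "ereal (phi (2*\<rho>-1) (2-3*\<rho>)) \<le> Sup A" using lo by (rule Sup_upper2)
  then show ?thesis using up SA rhs by simp
qed

end
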